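(* Let $k$ be a field of characteristic $\neq 2$ and let $\mathfrak g_\boxtimes$ be the Tetrahedron algebra over $k$. Let $\Omega$ (respectively $\Omega'$, $\Omega''$) be the subalgebra of $\mathfrak g_\boxtimes$ generated by $X_{12}$ and $X_{03}$ (respectively by $X_{23}$ and $X_{01}$; by $X_{31}$ and $X_{02}$). Then $\mathfrak g_\boxtimes=\Omega+\Omega'+\Omega''$.
   Context: The Tetrahedron algebra $\mathfrak g_\boxtimes$ is the Lie algebra over $k$ with generators $X_{ij}$ ($i,j\in\{0,1,2,3\}$, $i\neq j$) and relations $X_{ij}+X_{ji}=0$ for $i\neq j$; $[X_{ij},X_{jk}]=2(X_{ij}+X_{jk})$ for mutually distinct $i,j,k$; $[X_{hi},[X_{hi},[X_{hi},X_{jk}]]]=4[X_{hi},X_{jk}]$ for mutually distinct $h,i,j,k$. *)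

theory Defs
  imports Main
begin

definition lie_algebra :: "('k::field \<Rightarrow> 'v::ab_group_add \<Rightarrow> 'v) \<Rightarrow> ('v \<Rightarrow> 'v \<Rightarrow> 'v) \<Rightarrow> bool" where
  "lie_algebra sc br \<longleftrightarrow>
     (\<forall>a x y. sc a (x + y) = sc a x + sc a y) \<and>
     (\<forall>a b x. sc (a + b) x = sc a x + sc b x) \<and>
     (\<forall>a b x. sc a (sc b x) = sc (a * b) x) \<and>
     (\<forall>x. sc 1 x = x) \<and>
     (\<forall>x y z. br (x + y) z = br x z + br y z) \<and>
     (\<forall>x y z. br x (y + z) = br x y + br x z) \<and>
     (\<forall>a x y. br (sc a x) y = sc a (br x y)) \<and>
     (\<forall>a x y. br x (sc a y) = sc a (br x y)) \<and>
     (\<forall>x. br x x = 0) \<and>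
     (\<forall>x y z. br x (br y z) + br y (br z x) + br z (br x y) = 0)"

definition lie_subalg_gen :: "('k::field \<Rightarrow> 'v::ab_group_add \<Rightarrow> 'v) \<Rightarrow> ('v \<Rightarrow> 'v \<Rightarrow> 'v) \<Rightarrow> 'v set \<Rightarrow> 'v set" where
  "lie_subalg_gen sc br S = \<Inter>{A. S \<subseteq> A \<and> 0 \<in> A \<and> (\<forall>x\<in>A. \<forall>y\<in>A. x + y \<in> A) \<and>
       (\<forall>c. \<forall>x\<in>A. sc c x \<in> A) \<and> (\<forall>x\<in>A. \<forall>y\<in>A. br x y \<in> A)}"

definition tetrahedron_relations :: "('k::field \<Rightarrow> 'v::ab_group_add \<Rightarrow> 'v) \<Rightarrow> ('v \<Rightarrow> 'v \<Rightarrow> 'v) \<Rightarrow> (nat \<Rightarrow> nat \<Rightarrow> 'v) \<Rightarrow> bool" where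
  "tetrahedron_relations sc br X \<longleftrightarrow>
     (\<forall>i<4. \<forall>j<4. i \<noteq> j \<longrightarrow> X i j + X j i = 0) \<and>
     (\<forall>i<4. \<forall>j<4. \<forall>k<4. i \<noteq> j \<and> j \<noteq> k \<and> i \<noteq> k \<longrightarrow>
         br (X i j) (X j k) = sc 2 (X i j + X j k)) \<and>
     (\<forall>h<4. \<forall>i<4. \<forall>j<4. \<forall>k<4. distinct [h, i, j, k] \<longrightarrow>
         br (X h i) (br (X h i) (br (X h i) (X j k))) = sc 4 (br (X h i) (X j k)))"

end

theory Submission
  imports Defs
begin

locale LA =
  fixes sc :: "'k::field \<Rightarrow> 'v::ab_group_add \<Rightarrow> 'v"
    and br :: "'v \<Rightarrow> 'v \<Rightarrow> 'v"
  assumes lie: "lie_algebra sc br"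
begin

lemma sc_addr: "sc a (x + y) = sc a x + sc a y" using lie unfolding lie_algebra_def by auto
lemma sc_addl: "sc (a + b) x = sc a x + sc b x" using lie unfolding lie_algebra_def by auto
lemma sc_sc: "sc a (sc b x) = sc (a * b) x" using lie unfolding lie_algebra_def by auto
lemma sc_one: "sc 1 x = x" using lie unfolding lie_algebra_def by auto
lemma br_addl: "br (x + y) z = br x z + br y z" using lie unfolding lie_algebra_def by auto
lemma br_addr: "br x (y + z) = br x y + br x z" using lie unfolding lie_algebra_def by auto
lemma br_scl: "br (sc a x) y = sc a (br x y)" using lie unfolding lie_algebra_def by auto
lemma br_scr: "br x (sc a y) = sc a (br x y)" using lie unfolding lie_algebra_def by auto
lemma br_self: "br x x = 0" using lie unfolding lie_algebra_def by auto
lemma jacobi: "br x (br y z) + br y (br z x) + br z (br x y) = 0" using lie unfolding lie_algebra_def by auto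

lemma sc_zero: "sc 0 x = 0"
proof -
  have "sc 0 x = sc 0 x + sc 0 x" using sc_addl[of 0 0 x] by simp
  then show ?thesis by simp
qed

lemma sc_neg: "sc (-a) x = - sc a x"
proof -
  have "sc a x + sc (-a) x = 0" using sc_addl[of a "-a" x] sc_zero by simp
  then show ?thesis by (simp add: eq_neg_iff_add_eq_0 add.commute)
qed

lemma sc_zero_r: "sc a 0 = 0"
proof -
  have "sc a 0 = sc a 0 + sc a 0" using sc_addr[of a 0 0] by simp
  then show ?thesis by simp
qed

lemma sc_negr: "sc a (- x) = - sc a x"
proof -
  have "sc a x + sc a (-x) = 0" using sc_addr[of a x "-x"] sc_zero_r by simp
  then show ?thesis by (simp add: eq_neg_iff_add_eq_0 add.commute)
qed

lemma neg_sc: "- x = sc (-1) x" using sc_neg[of 1 x] sc_one by simp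

lemma br_zero_l: "br 0 y = 0"
proof -
  have "br 0 y = br 0 y + br 0 y" using br_addl[of 0 0 y] by simp
  then show ?thesis by simp
qed

lemma br_zero_r: "br y 0 = 0"
proof -
  have "br y 0 = br y 0 + br y 0" using br_addr[of y 0 0] by simp
  then show ?thesis by simp
qed

lemma br_negl: "br (- x) y = - br x y"
proof -
  have "br x y + br (-x) y = 0" using br_addl[of x "-x" y] br_zero_l by simp
  then show ?thesis by (simp add: eq_neg_iff_add_eq_0 add.commute)
qed

lemma br_negr: "br y (- x) = - br y x"
proof -
  have "br y x + br y (-x) = 0" using br_addr[of y x "-x"] br_zero_r by simp
  then show ?thesis by (simp add: eq_neg_iff_add_eq_0 add.commute)
qed

lemma br_anti: "br x y = - br y x"
proof -
  have "br (x + y) (x + y) = br x x + br x y + (br y x + br y y)" by (simp add: br_addl br_addr)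
  then have "br x y + br y x = 0" by (simp add: br_self)
  then show ?thesis by (simp add: eq_neg_iff_add_eq_0)
qed

lemma br_br: "br (br x y) z = br x (br y z) - br y (br x z)"
proof -
  have j: "br x (br y z) + br y (br z x) + br z (br x y) = 0" by (rule jacobi)
  have a: "br z (br x y) = - br (br x y) z" by (rule br_anti)
  have b: "br y (br z x) = - br y (br x z)" using br_anti[of z x] br_negr by simp
  from j a b show ?thesis by (simp add: algebra_simps eq_neg_iff_add_eq_0)
qed

abbreviation G where "G \<equiv> lie_subalg_gen sc br"

lemma G_sub: "S \<subseteq> G S" unfolding lie_subalg_gen_def by blast
lemma G_0: "0 \<in> G S" unfolding lie_subalg_gen_def by blast
lemma G_add: "x \<in> G S \<Longrightarrow> y \<in> G S \<Longrightarrow> x + y \<in> G S" unfolding lie_subalg_gen_def by blast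
lemma G_sc: "x \<in> G S \<Longrightarrow> sc c x \<in> G S" unfolding lie_subalg_gen_def by blast
lemma G_br: "x \<in> G S \<Longrightarrow> y \<in> G S \<Longrightarrow> br x y \<in> G S" unfolding lie_subalg_gen_def by blast
lemma G_neg: "x \<in> G S \<Longrightarrow> - x \<in> G S" using G_sc neg_sc by metis
lemma G_least:
  assumes "S \<subseteq> A" "0 \<in> A" "\<forall>x\<in>A. \<forall>y\<in>A. x + y \<in> A" "\<forall>c. \<forall>x\<in>A. sc c x \<in> A"
    "\<forall>x\<in>A. \<forall>y\<in>A. br x y \<in> A"
  shows "G S \<subseteq> A"
  using assms unfolding lie_subalg_gen_def by blast

lemma key:
  assumes hA: "\<exists>p q. br A g = sc p A + sc q g"
    and hB: "\<exists>p q. br B g = sc p B + sc q g"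
    and y: "y \<in> G {A, B}"
  shows "\<exists>t c. t \<in> G {A, B} \<and> br y g = t + sc c g"
proof -
  define T where "T = G {A, B}"
  define W where "W = {t + sc c g | t c. t \<in> T}"
  have W_add: "w1 + w2 \<in> W" if "w1 \<in> W" "w2 \<in> W" for w1 w2
  proof -
    from that obtain t1 c1 t2 c2 where "w1 = t1 + sc c1 g" "w2 = t2 + sc c2 g" "t1 \<in> T" "t2 \<in> T"
      unfolding W_def by blast
    then have "w1 + w2 = (t1 + t2) + sc (c1 + c2) g" "t1 + t2 \<in> T"
      by (auto simp: sc_addl algebra_simps T_def G_add)
    then show ?thesis unfolding W_def by blast
  qed
  have W_sc: "sc a w \<in> W" if "w \<in> W" for w a
  proof -
    from that obtain t c where "w = t + sc c g" "t \<in> T" unfolding W_def by blast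
    then have "sc a w = sc a t + sc (a * c) g" "sc a t \<in> T"
      by (auto simp: sc_addr sc_sc T_def G_sc)
    then show ?thesis unfolding W_def by blast
  qed
  have W_T: "t \<in> W" if "t \<in> T" for t
  proof -
    have "t = t + sc 0 g" by (simp add: sc_zero)
    then show ?thesis using that unfolding W_def by blast
  qed
  have W_minus: "w1 - w2 \<in> W" if "w1 \<in> W" "w2 \<in> W" for w1 w2
    using W_add[OF that(1) W_sc[OF that(2), of "-1"]] by (simp add: neg_sc[symmetric])
  have gW: "g \<in> W"
  proof -
    have "g = 0 + sc 1 g" by (simp add: sc_one)
    moreover have "(0::'v) \<in> T" unfolding T_def by (rule G_0)
    ultimately show ?thesis unfolding W_def by blast
  qed
  define N where "N = {y. \<forall>w\<in>W. br y w \<in> W}"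
  have gen: "br a w \<in> W" if a: "a \<in> {A, B}" and w: "w \<in> W" for a w
  proof -
    from w obtain t c where wt: "w = t + sc c g" "t \<in> T" unfolding W_def by blast
    have aT: "a \<in> T" using a G_sub unfolding T_def by blast
    have "\<exists>p q. br a g = sc p a + sc q g" using a hA hB by blast
    then obtain p q where pq: "br a g = sc p a + sc q g" by blast
    have "br a w = br a t + sc c (br a g)" using wt by (simp add: br_addr br_scr)
    moreover have "br a t \<in> W" using W_T aT wt(2) unfolding T_def by (simp add: G_br)
    moreover have "br a g \<in> W" unfolding pq
      by (rule W_add[OF W_T W_sc[OF gW]]) (use aT in \<open>simp add: T_def G_sc\<close>)
    ultimately show ?thesis using W_add W_sc by simp
  qed
  have "G {A, B} \<subseteq> N"
  proof (rule G_least)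
    show "{A, B} \<subseteq> N" unfolding N_def using gen by blast
    show "0 \<in> N" unfolding N_def using W_T G_0 by (simp add: br_zero_l T_def)
    show "\<forall>x\<in>N. \<forall>y\<in>N. x + y \<in> N" unfolding N_def using W_add by (simp add: br_addl)
    show "\<forall>c. \<forall>x\<in>N. sc c x \<in> N" unfolding N_def using W_sc by (simp add: br_scl)
    show "\<forall>x\<in>N. \<forall>y\<in>N. br x y \<in> N" unfolding N_def using W_minus by (simp add: br_br)
  qed
  with y have "br y g \<in> W" using gW unfolding N_def by blast
  then show ?thesis unfolding W_def T_def by blast
qed

end

context
  fixes sc :: "'k::field \<Rightarrow> 'v::ab_group_add \<Rightarrow> 'v"
    and br :: "'v \<Rightarrow> 'v \<Rightarrow> 'v"
    and X :: "nat \<Rightarrow> nat \<Rightarrow> 'v"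
  assumes lie: "lie_algebra sc br"
    and rel: "tetrahedron_relations sc br X"
begin

interpretation LA sc br by (rule LA.intro[OF lie])

lemma Xanti: "i < 4 \<Longrightarrow> j < 4 \<Longrightarrow> i \<noteq> j \<Longrightarrow> X j i = - X i j"
proof -
  assume a: "i < 4" "j < 4" "i \<noteq> j"
  have "\<forall>i<4. \<forall>j<4. i \<noteq> j \<longrightarrow> X i j + X j i = 0"
    using rel unfolding tetrahedron_relations_def by (elim conjE)
  then have "X i j + X j i = 0" using a by blast
  then show ?thesis by (simp add: add_eq_0_iff)
qed

lemma Xbr: "i < 4 \<Longrightarrow> j < 4 \<Longrightarrow> k < 4 \<Longrightarrow> i \<noteq> j \<Longrightarrow> j \<noteq> k \<Longrightarrow> i \<noteq> k \<Longrightarrow>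
   br (X i j) (X j k) = sc 2 (X i j) + sc 2 (X j k)"
proof -
  assume a: "i < 4" "j < 4" "k < 4" "i \<noteq> j" "j \<noteq> k" "i \<noteq> k"
  have "\<forall>i<4. \<forall>j<4. \<forall>k<4. i \<noteq> j \<and> j \<noteq> k \<and> i \<noteq> k \<longrightarrow>
         br (X i j) (X j k) = sc 2 (X i j + X j k)"
    using rel unfolding tetrahedron_relations_def by (elim conjE)
  then have "br (X i j) (X j k) = sc 2 (X i j + X j k)" using a by blast
  then show ?thesis by (simp add: LA.sc_addr[OF LA.intro[OF lie]])
qed

lemma share:
  assumes "i < 4" "j < 4" "k < 4" "l < 4" "i \<noteq> j" "k \<noteq> l"
    "(i = k \<and> j \<noteq> l) \<or> (i = l \<and> j \<noteq> k) \<or> (j = k \<and> i \<noteq> l) \<or> (j = l \<and> i \<noteq> k)"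
  shows "\<exists>p q. br (X i j) (X k l) = sc p (X i j) + sc q (X k l)"
  using assms(7)
proof (elim disjE conjE)
  assume e: "i = k" "j \<noteq> l"
  have x1: "X i j = - X j i" using Xanti[of j i] assms by simp
  have x2: "br (X j i) (X i l) = sc 2 (X j i) + sc 2 (X i l)" using Xbr[of j i l] assms e by simp
  have "br (X i j) (X i l) = br (- X j i) (X i l)" using x1 by simp
  also have "\<dots> = - (sc 2 (X j i) + sc 2 (X i l))" using x2 by (simp add: br_negl)
  also have "\<dots> = sc 2 (X i j) + sc (-2) (X i l)"
    using x1 by (simp add: sc_negr sc_neg)
  finally show ?thesis using e by blast
next
  assume e: "i = l" "j \<noteq> k"
  have x2: "br (X k i) (X i j) = sc 2 (X k i) + sc 2 (X i j)" using Xbr[of k i j] assms e by simp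
  have "br (X i j) (X k i) = - br (X k i) (X i j)" by (rule br_anti)
  also have "\<dots> = - (sc 2 (X k i) + sc 2 (X i j))" using x2 by simp
  also have "\<dots> = sc (-2) (X i j) + sc (-2) (X k i)" by (simp add: sc_neg add_ac)
  finally show ?thesis using e by blast
next
  assume e: "j = k" "i \<noteq> l"
  have "br (X i j) (X j l) = sc 2 (X i j) + sc 2 (X j l)" using Xbr[of i j l] assms e by simp
  then show ?thesis using e by blast
next
  assume e: "j = l" "i \<noteq> k"
  have x1: "X k j = - X j k" using Xanti[of j k] assms e by simp
  have x2: "br (X i j) (X j k) = sc 2 (X i j) + sc 2 (X j k)" using Xbr[of i j k] assms e by simp
  have "br (X i j) (X k j) = br (X i j) (- X j k)" using x1 by simp
  also have "\<dots> = - (sc 2 (X i j) + sc 2 (X j k))" using x2 by (simp add: br_negr)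
  also have "\<dots> = sc (-2) (X i j) + sc 2 (X k j)"
    using x1 by (simp add: sc_negr sc_neg)
  finally show ?thesis using e by blast
qed

end

theorem proposition1p5:
  fixes sc :: "'k::field \<Rightarrow> 'v::ab_group_add \<Rightarrow> 'v"
    and br :: "'v \<Rightarrow> 'v \<Rightarrow> 'v"
    and X :: "nat \<Rightarrow> nat \<Rightarrow> 'v"
  assumes char: "(2::'k) \<noteq> 0"
    and lie: "lie_algebra sc br"
    and rel: "tetrahedron_relations sc br X"
  shows "lie_subalg_gen sc br {X i j | i j. i < 4 \<and> j < 4 \<and> i \<noteq> j} =
         {a + b + c | a b c.
            a \<in> lie_subalg_gen sc br {X 1 2, X 0 3} \<and>
            b \<in> lie_subalg_gen sc br {X 2 3, X 0 1} \<and>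
            c \<in> lie_subalg_gen sc br {X 3 1, X 0 2}}"
proof -
  interpret LA sc br by (rule LA.intro[OF lie])
  note shr = share[OF lie rel]
  note xa = Xanti[OF lie rel]
  define O1 where "O1 = G {X 1 2, X 0 3}"
  define O2 where "O2 = G {X 2 3, X 0 1}"
  define O3 where "O3 = G {X 3 1, X 0 2}"
  define S where "S = {a + b + c | a b c. a \<in> O1 \<and> b \<in> O2 \<and> c \<in> O3}"
  have S_add: "x + y \<in> S" if "x \<in> S" "y \<in> S" for x y
  proof -
    from that obtain a b c a' b' c' where "x = a + b + c" "y = a' + b' + c'"
      "a \<in> O1" "b \<in> O2" "c \<in> O3" "a' \<in> O1" "b' \<in> O2" "c' \<in> O3" unfolding S_def by blast
    then have "x + y = (a + a') + (b + b') + (c + c')" "a + a' \<in> O1" "b + b' \<in> O2" "c + c' \<in> O3"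
      by (auto simp: algebra_simps O1_def O2_def O3_def G_add)
    then show ?thesis unfolding S_def by blast
  qed
  have S_sc: "sc r x \<in> S" if "x \<in> S" for x r
  proof -
    from that obtain a b c where "x = a + b + c"
      "a \<in> O1" "b \<in> O2" "c \<in> O3" unfolding S_def by blast
    then have "sc r x = sc r a + sc r b + sc r c" "sc r a \<in> O1" "sc r b \<in> O2" "sc r c \<in> O3"
      by (auto simp: sc_addr O1_def O2_def O3_def G_sc)
    then show ?thesis unfolding S_def by blast
  qed
  have S_neg: "- x \<in> S" if "x \<in> S" for x using S_sc[OF that, of "-1"] by (simp add: neg_sc[symmetric])
  have S_0: "0 \<in> S"
  proof -
    have "(0::'v) = 0 + 0 + 0" by simp
    moreover have "(0::'v) \<in> O1" "(0::'v) \<in> O2" "(0::'v) \<in> O3" unfolding O1_def O2_def O3_def by (rule G_0)+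
    ultimately show ?thesis unfolding S_def by blast
  qed
  have O1S: "O1 \<subseteq> S"
  proof
    fix a assume "a \<in> O1" then show "a \<in> S" unfolding S_def using G_0 O2_def O3_def
      by (metis (mono_tags, lifting) add.right_neutral mem_Collect_eq)
  qed
  have O2S: "O2 \<subseteq> S"
  proof
    fix a assume "a \<in> O2" then show "a \<in> S" unfolding S_def using G_0 O1_def O3_def
      by (metis (mono_tags, lifting) add.right_neutral add.left_neutral mem_Collect_eq)
  qed
  have O3S: "O3 \<subseteq> S"
  proof
    fix a assume "a \<in> O3" then show "a \<in> S" unfolding S_def using G_0 O1_def O2_def
      by (metis (mono_tags, lifting) add.left_neutral mem_Collect_eq)
  qed
  have g1: "X 1 2 \<in> O1" "X 0 3 \<in> O1" unfolding O1_def using G_sub by blast+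
  have g2: "X 2 3 \<in> O2" "X 0 1 \<in> O2" unfolding O2_def using G_sub by blast+
  have g3: "X 3 1 \<in> O3" "X 0 2 \<in> O3" unfolding O3_def using G_sub by blast+
  have gS: "X 1 2 \<in> S" "X 0 3 \<in> S" "X 2 3 \<in> S" "X 0 1 \<in> S" "X 3 1 \<in> S" "X 0 2 \<in> S"
    using g1 g2 g3 O1S O2S O3S by blast+
  have H1: "br g t \<in> S" if "t \<in> G T" "g \<in> G T" "G T \<subseteq> S" for g t T
    using that G_br by blast
  have H2: "br g t \<in> S" if t: "t \<in> G {A, B}" and TS: "G {A, B} \<subseteq> S" and g: "g \<in> S"
    and hA: "\<exists>p q. br A g = sc p A + sc q g" and hB: "\<exists>p q. br B g = sc p B + sc q g" for g t A B
  proof -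
    obtain t' c where t': "t' \<in> G {A, B}" "br t g = t' + sc c g" using key[OF hA hB t] by blast
    have "br g t = - (t' + sc c g)" using t' br_anti by metis
    moreover have "t' + sc c g \<in> S" using t' TS g S_add S_sc by blast
    ultimately show ?thesis using S_neg by metis
  qed
  have P1: "br g t \<in> S" if "t \<in> O1" "g \<in> {X 1 2, X 0 3, X 2 3, X 0 1, X 3 1, X 0 2}" for g t
    using that(2)
  proof (elim insertE emptyE)
    show "g = X 1 2 \<Longrightarrow> br g t \<in> S" using H1 that(1) g1 O1S unfolding O1_def by blast
    show "g = X 0 3 \<Longrightarrow> br g t \<in> S" using H1 that(1) g1 O1S unfolding O1_def by blast
    show "g = X 2 3 \<Longrightarrow> br g t \<in> S"
      by (rule H2[OF that(1)[unfolded O1_def] O1S[unfolded O1_def]]) (auto simp: gS gS[simplified] intro!: shr)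
    show "g = X 0 1 \<Longrightarrow> br g t \<in> S"
      by (rule H2[OF that(1)[unfolded O1_def] O1S[unfolded O1_def]]) (auto simp: gS gS[simplified] intro!: shr)
    show "g = X 3 1 \<Longrightarrow> br g t \<in> S"
      by (rule H2[OF that(1)[unfolded O1_def] O1S[unfolded O1_def]]) (auto simp: gS gS[simplified] intro!: shr)
    show "g = X 0 2 \<Longrightarrow> br g t \<in> S"
      by (rule H2[OF that(1)[unfolded O1_def] O1S[unfolded O1_def]]) (auto simp: gS gS[simplified] intro!: shr)
  qed
  have P2: "br g t \<in> S" if "t \<in> O2" "g \<in> {X 1 2, X 0 3, X 2 3, X 0 1, X 3 1, X 0 2}" for g t
    using that(2)
  proof (elim insertE emptyE)
    show "g = X 2 3 \<Longrightarrow> br g t \<in> S" using H1 that(1) g2 O2S unfolding O2_def by blast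
    show "g = X 0 1 \<Longrightarrow> br g t \<in> S" using H1 that(1) g2 O2S unfolding O2_def by blast
    show "g = X 1 2 \<Longrightarrow> br g t \<in> S"
      by (rule H2[OF that(1)[unfolded O2_def] O2S[unfolded O2_def]]) (auto simp: gS gS[simplified] intro!: shr)
    show "g = X 0 3 \<Longrightarrow> br g t \<in> S"
      by (rule H2[OF that(1)[unfolded O2_def] O2S[unfolded O2_def]]) (auto simp: gS gS[simplified] intro!: shr)
    show "g = X 3 1 \<Longrightarrow> br g t \<in> S"
      by (rule H2[OF that(1)[unfolded O2_def] O2S[unfolded O2_def]]) (auto simp: gS gS[simplified] intro!: shr)
    show "g = X 0 2 \<Longrightarrow> br g t \<in> S"
      by (rule H2[OF that(1)[unfolded O2_def] O2S[unfolded O2_def]]) (auto simp: gS gS[simplified] intro!: shr)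
  qed
  have P3: "br g t \<in> S" if "t \<in> O3" "g \<in> {X 1 2, X 0 3, X 2 3, X 0 1, X 3 1, X 0 2}" for g t
    using that(2)
  proof (elim insertE emptyE)
    show "g = X 3 1 \<Longrightarrow> br g t \<in> S" using H1 that(1) g3 O3S unfolding O3_def by blast
    show "g = X 0 2 \<Longrightarrow> br g t \<in> S" using H1 that(1) g3 O3S unfolding O3_def by blast
    show "g = X 1 2 \<Longrightarrow> br g t \<in> S"
      by (rule H2[OF that(1)[unfolded O3_def] O3S[unfolded O3_def]]) (auto simp: gS gS[simplified] intro!: shr)
    show "g = X 0 3 \<Longrightarrow> br g t \<in> S"
      by (rule H2[OF that(1)[unfolded O3_def] O3S[unfolded O3_def]]) (auto simp: gS gS[simplified] intro!: shr)
    show "g = X 2 3 \<Longrightarrow> br g t \<in> S"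
      by (rule H2[OF that(1)[unfolded O3_def] O3S[unfolded O3_def]]) (auto simp: gS gS[simplified] intro!: shr)
    show "g = X 0 1 \<Longrightarrow> br g t \<in> S"
      by (rule H2[OF that(1)[unfolded O3_def] O3S[unfolded O3_def]]) (auto simp: gS gS[simplified] intro!: shr)
  qed
  define N where "N = {y. y \<in> S \<and> (\<forall>s\<in>S. br y s \<in> S)}"
  have PB: "g \<in> N" if g: "g \<in> {X 1 2, X 0 3, X 2 3, X 0 1, X 3 1, X 0 2}" for g
  proof -
    have "br g s \<in> S" if "s \<in> S" for s
    proof -
      from that obtain a b c where abc: "s = a + b + c"
        "a \<in> O1" "b \<in> O2" "c \<in> O3" unfolding S_def by blast
      have "br g s = br g a + br g b + br g c" using abc(1) by (simp add: br_addr)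
      moreover have "br g a \<in> S" by (rule P1[OF abc(2) g])
      moreover have "br g b \<in> S" by (rule P2[OF abc(3) g])
      moreover have "br g c \<in> S" by (rule P3[OF abc(4) g])
      ultimately show ?thesis using S_add by metis
    qed
    moreover have "g \<in> S" using g gS by blast
    ultimately show ?thesis unfolding N_def by blast
  qed
  have N_neg: "- g \<in> N" if "g \<in> N" for g
    using that S_neg unfolding N_def by (simp add: br_negl)
  have b1: "X 1 2 \<in> N" by (rule PB) blast
  have b2: "X 0 3 \<in> N" by (rule PB) blast
  have b3: "X 2 3 \<in> N" by (rule PB) blast
  have b4: "X 0 1 \<in> N" by (rule PB) blast
  have b5: "X 3 1 \<in> N" by (rule PB) blast
  have b6: "X 0 2 \<in> N" by (rule PB) blast
  have "X 2 1 = - X 1 2" by (rule xa) simp_all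
  then have r1: "X 2 1 \<in> N" using N_neg[OF b1] by metis
  have "X 3 0 = - X 0 3" by (rule xa) simp_all
  then have r2: "X 3 0 \<in> N" using N_neg[OF b2] by metis
  have "X 3 2 = - X 2 3" by (rule xa) simp_all
  then have r3: "X 3 2 \<in> N" using N_neg[OF b3] by metis
  have "X 1 0 = - X 0 1" by (rule xa) simp_all
  then have r4: "X 1 0 \<in> N" using N_neg[OF b4] by metis
  have "X 1 3 = - X 3 1" by (rule xa) simp_all
  then have r5: "X 1 3 \<in> N" using N_neg[OF b5] by metis
  have "X 2 0 = - X 0 2" by (rule xa) simp_all
  then have r6: "X 2 0 \<in> N" using N_neg[OF b6] by metis
  have Ngen: "X i j \<in> N" if "i < 4" "j < 4" "i \<noteq> j" for i j
  proof -
    have "i = 0 \<or> i = 1 \<or> i = 2 \<or> i = 3" "j = 0 \<or> j = 1 \<or> j = 2 \<or> j = 3" using that by arith+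
    then show ?thesis using that b1 b2 b3 b4 b5 b6 r1 r2 r3 r4 r5 r6
      by (elim disjE) blast+
  qed
  let ?L = "G {X i j | i j. i < 4 \<and> j < 4 \<and> i \<noteq> j}"
  have "?L \<subseteq> N"
  proof (rule G_least)
    show "{X i j | i j. i < 4 \<and> j < 4 \<and> i \<noteq> j} \<subseteq> N" using Ngen by blast
    show "0 \<in> N" unfolding N_def using S_0 by (simp add: br_zero_l)
    show "\<forall>x\<in>N. \<forall>y\<in>N. x + y \<in> N" unfolding N_def using S_add by (simp add: br_addl)
    show "\<forall>c. \<forall>x\<in>N. sc c x \<in> N" unfolding N_def using S_sc by (simp add: br_scl)
    show "\<forall>x\<in>N. \<forall>y\<in>N. br x y \<in> N"
    proof (intro ballI)
      fix x y assume x: "x \<in> N" and y: "y \<in> N"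
      have xs: "\<And>s. s \<in> S \<Longrightarrow> br x s \<in> S" and ys: "\<And>s. s \<in> S \<Longrightarrow> br y s \<in> S" "y \<in> S"
        using x y unfolding N_def by blast+
      have "br (br x y) s \<in> S" if "s \<in> S" for s
      proof -
        have "br (br x y) s = br x (br y s) + - br y (br x s)" by (simp add: br_br)
        moreover have "br x (br y s) \<in> S" using xs ys that by blast
        moreover have "- br y (br x s) \<in> S" using xs ys that S_neg by blast
        ultimately show ?thesis using S_add by metis
      qed
      moreover have "br x y \<in> S" using xs ys by blast
      ultimately show "br x y \<in> N" unfolding N_def by blast
    qed
  qed
  then have sub1: "?L \<subseteq> S" unfolding N_def by blast
  have sub2: "G {A, B} \<subseteq> ?L" if "A \<in> ?L" "B \<in> ?L" for A B
    by (rule G_least) (use that G_0 G_add G_sc G_br in blast)+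
  have X1: "X i j \<in> ?L" if "i < 4" "j < 4" "i \<noteq> j" for i j
  proof (rule subsetD[OF G_sub])
    show "X i j \<in> {X i j | i j. i < 4 \<and> j < 4 \<and> i \<noteq> j}" using that by blast
  qed
  have "O1 \<subseteq> ?L" unfolding O1_def by (rule sub2; rule X1; simp)
  moreover have "O2 \<subseteq> ?L" unfolding O2_def by (rule sub2; rule X1; simp)
  moreover have "O3 \<subseteq> ?L" unfolding O3_def by (rule sub2; rule X1; simp)
  ultimately have "S \<subseteq> ?L" unfolding S_def using G_add by blast
  with sub1 have "?L = S" by (rule equalityI)
  then show ?thesis unfolding S_def O1_def O2_def O3_def .
qed

end
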